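(* Let $m\ge 2$ and $n\ge2$ be integers with $n\geq \lfloor m/2\rfloor+1$. Then $\gamma_{oir2}(P_m\Box K_n)=m(n-1)=\alpha(P_m)\beta(K_n)+\beta(P_m)|V(K_n)|-\min\{\beta(P_m),\beta(K_n)\}$.
   Context: $P_m$ is the path on $m$ vertices and $K_n$ the complete graph on $n$ vertices. $\alpha(F)$ is the independence number and $\beta(F)$ the vertex cover number of a graph $F$. For a graph $G$, a function $f:V(G)\to\mathcal{P}(\{1,2\})$ is an outer-independent 2-rainbow dominating function (OI2RD function) if every vertex $v$ with $f(v)=\emptyset$ satisfies $\bigcup_{u\in N(v)}f(u)=\{1,2\}$ and the set $\{v: f(v)=\emptyset\}$ is independent. The weight of $f$ is $\sum_{v}|f(v)|$ and $\gamma_{oir2}(G)$ is the minimum weight of an OI2RD function of $G$. The Cartesian product $G\Box H$ has vertex set $V(G)\times V(H)$, with $(x,y)(x',y')$ an edge iff either $x=x'$ and $yy'\in E(H)$, or $y=y'$ and $xx'\in E(G)$. *)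

theory Defs
  imports Main
begin

text \<open>A (finite, simple, undirected) graph is a pair of a vertex set and a
  symmetric irreflexive edge relation given as a set of ordered pairs.\<close>

type_synonym 'a graph = "'a set \<times> ('a \<times> 'a) set"

definition verts :: "'a graph \<Rightarrow> 'a set" where "verts G = fst G"
definition edges :: "'a graph \<Rightarrow> ('a \<times> 'a) set" where "edges G = snd G"

definition nbhd :: "'a graph \<Rightarrow> 'a \<Rightarrow> 'a set" where
  "nbhd G v = {u. (v, u) \<in> edges G}"

definition path_graph :: "nat \<Rightarrow> nat graph" where
  "path_graph m = ({0..<m}, {(i, j). i < m \<and> j < m \<and> (j = i + 1 \<or> i = j + 1)})"

definition complete_graph :: "nat \<Rightarrow> nat graph" where
  "complete_graph n = ({0..<n}, {(i, j). i < n \<and> j < n \<and> i \<noteq> j})"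

definition cart_prod :: "'a graph \<Rightarrow> 'b graph \<Rightarrow> ('a \<times> 'b) graph" where
  "cart_prod G H = (verts G \<times> verts H,
     {((x, y), (x', y')). (x = x' \<and> x \<in> verts G \<and> (y, y') \<in> edges H)
                        \<or> (y = y' \<and> y \<in> verts H \<and> (x, x') \<in> edges G)})"

definition independent_set :: "'a graph \<Rightarrow> 'a set \<Rightarrow> bool" where
  "independent_set G S \<longleftrightarrow> S \<subseteq> verts G \<and> (\<forall>u\<in>S. \<forall>v\<in>S. (u, v) \<notin> edges G)"

definition vertex_cover :: "'a graph \<Rightarrow> 'a set \<Rightarrow> bool" where
  "vertex_cover G S \<longleftrightarrow> S \<subseteq> verts G \<and> (\<forall>(u, v)\<in>edges G. u \<in> S \<or> v \<in> S)"

definition indep_number :: "'a graph \<Rightarrow> nat" where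
  "indep_number G = Max {card S | S. independent_set G S}"

definition cover_number :: "'a graph \<Rightarrow> nat" where
  "cover_number G = Min {card S | S. vertex_cover G S}"

definition oi2rd :: "'a graph \<Rightarrow> ('a \<Rightarrow> nat set) \<Rightarrow> bool" where
  "oi2rd G f \<longleftrightarrow>
     (\<forall>v\<in>verts G. f v \<subseteq> {1, 2}) \<and>
     (\<forall>v\<in>verts G. f v = {} \<longrightarrow> (\<Union>u\<in>nbhd G v. f u) = {1, 2}) \<and>
     independent_set G {v \<in> verts G. f v = {}}"

definition oi2rd_weight :: "'a graph \<Rightarrow> ('a \<Rightarrow> nat set) \<Rightarrow> nat" where
  "oi2rd_weight G f = (\<Sum>v\<in>verts G. card (f v))"

definition gamma_oir2 :: "'a graph \<Rightarrow> nat" where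
  "gamma_oir2 G = Min {oi2rd_weight G f | f. oi2rd G f}"

end

theory Submission
  imports Defs
begin

abbreviation GG where "GG m n \<equiv> cart_prod (path_graph m) (complete_graph n)"

lemma G_verts: "verts (GG m n) = {0..<m} \<times> {0..<n}"
  by (simp add: cart_prod_def verts_def path_graph_def complete_graph_def)

lemma G_edges: "(((x::nat),(y::nat)),(x',y')) \<in> edges (GG m n) \<longleftrightarrow>
   (x=x' \<and> x<m \<and> y<n \<and> y'<n \<and> y\<noteq>y') \<or> (y=y' \<and> y<n \<and> x<m \<and> x'<m \<and> (x'=x+1 \<or> x=x'+1))"
  by (auto simp: cart_prod_def edges_def verts_def path_graph_def complete_graph_def)

lemma lower:
  assumes f: "oi2rd (GG m n) f"
  shows "m * n - m \<le> oi2rd_weight (GG m n) f"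
proof -
  let ?V = "{0..<m} \<times> {0..<n}"
  let ?Z = "{v \<in> ?V. f v = {}}"
  have ind: "independent_set (GG m n) ?Z" using f by (simp add: oi2rd_def G_verts)
  have sub: "\<forall>v\<in>?V. f v \<subseteq> {1,2}" using f by (simp add: oi2rd_def G_verts)
  have "inj_on fst ?Z"
  proof (rule inj_onI)
    fix a b assume a: "a \<in> ?Z" and b: "b \<in> ?Z" and e: "fst a = fst b"
    obtain x y where ax: "a = (x,y)" by (cases a)
    obtain x' y' where bx: "b = (x',y')" by (cases b)
    show "a = b"
    proof (rule ccontr)
      assume "a \<noteq> b"
      hence "(a,b) \<in> edges (GG m n)" using a b e ax bx by (auto simp: G_edges)
      thus False using ind a b unfolding independent_set_def by blast
    qed
  qed
  hence c0: "card ?Z \<le> m"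
    using card_inj_on_le[of fst ?Z "{0..<m}"] by force
  have cd: "card (?V - ?Z) = card ?V - card ?Z"
    by (rule card_Diff_subset) auto
  have cV: "card ?V = m*n" by simp
  have s1: "(\<Sum>v\<in>?V - ?Z. (1::nat)) \<le> (\<Sum>v\<in>?V - ?Z. card (f v))"
  proof (rule sum_mono)
    fix v assume v: "v \<in> ?V - ?Z"
    have "f v \<subseteq> {1,2}" using sub v by blast
    hence "finite (f v)" by (rule finite_subset) simp
    moreover have "f v \<noteq> {}" using v by blast
    ultimately show "1 \<le> card (f v)" by (simp add: Suc_le_eq card_gt_0_iff)
  qed
  have s2: "(\<Sum>v\<in>?V - ?Z. card (f v)) \<le> (\<Sum>v\<in>?V. card (f v))" by (rule sum_mono2) auto
  have s3: "(\<Sum>v\<in>?V - ?Z. (1::nat)) = card (?V - ?Z)" by (rule card_eq_sum[symmetric])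
  show ?thesis unfolding oi2rd_weight_def G_verts using c0 cd cV s1 s2 s3 by linarith
qed

lemma mod2_cases: "(x::nat) mod 2 = 0 \<or> x mod 2 = 1" by auto

definition fw :: "nat \<times> nat \<Rightarrow> nat set" where
  "fw v = (if snd v = fst v mod 2 then {} else if snd v = 1 - fst v mod 2
           then {fst v mod 2 + 1} else {2 - fst v mod 2})"

lemma fw_oi:
  assumes "m \<ge> 2" "n \<ge> 2"
  shows "oi2rd (GG m n) fw"
proof -
  have A: "\<forall>v\<in>verts (GG m n). fw v \<subseteq> {1,2}"
    by (auto simp: fw_def)
  have B: "(\<Union>u\<in>nbhd (GG m n) v. fw u) = {1,2}" if v: "v \<in> verts (GG m n)" "fw v = {}" for v
  proof -
    obtain x y where vx: "v = (x,y)" by (cases v)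
    have xy: "x < m" "y < n" "y = x mod 2" using v vx by (auto simp: G_verts fw_def split: if_splits)
    have s: "(\<Union>u\<in>nbhd (GG m n) v. fw u) \<subseteq> {1,2}"
      by (auto simp: fw_def)
    have x2: "x mod 2 < 2" by simp
    have pp1: "1 - x mod 2 \<noteq> x mod 2" using x2 by (cases "x mod 2") auto
    have pp2: "1 - x mod 2 < n" using assms x2 by linarith
    note pp = pp1 pp2
    have n1: "(x, 1 - x mod 2) \<in> nbhd (GG m n) v"
      using xy assms pp by (auto simp: nbhd_def vx G_edges)
    have f1: "fw (x, 1 - x mod 2) = {x mod 2 + 1}" using pp1 by (simp add: fw_def)
    obtain x' where x': "x' < m" "x' = x+1 \<or> x = x'+1"
    proof (cases "x+1 < m")
      case True then show ?thesis using that by blast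
    next
      case False then have "x = (x-1)+1" "x - 1 < m" using xy assms by auto
      then show ?thesis using that by blast
    qed
    have par: "x' mod 2 \<noteq> x mod 2" using x' by presburger
    have n2: "(x', x mod 2) \<in> nbhd (GG m n) v"
      using xy x' assms by (auto simp: nbhd_def vx G_edges)
    have f2: "fw (x', x mod 2) = {x' mod 2 + 1}" using par by (auto simp: fw_def)
    have "{x mod 2 + 1, x' mod 2 + 1} = {1,(2::nat)}" using par by auto
    hence "{1,2} \<subseteq> (\<Union>u\<in>nbhd (GG m n) v. fw u)" using n1 n2 f1 f2 by blast
    with s show ?thesis by blast
  qed
  have C: "independent_set (GG m n) {v \<in> verts (GG m n). fw v = {}}"
    unfolding independent_set_def
  proof (intro conjI ballI)
    fix a b assume a: "a \<in> {v \<in> verts (GG m n). fw v = {}}" and b: "b \<in> {v \<in> verts (GG m n). fw v = {}}"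
    obtain x y where ax: "a = (x,y)" by (cases a)
    obtain x' y' where bx: "b = (x',y')" by (cases b)
    have yy: "y = x mod 2" "y' = x' mod 2" using a b ax bx by (auto simp: fw_def split: if_splits)
    have pq: "x mod 2 = x' mod 2 \<Longrightarrow> \<not>(x' = x+1 \<or> x = x'+1)" by presburger
    show "(a,b) \<notin> edges (GG m n)" unfolding ax bx G_edges using yy pq by auto
  qed auto
  show ?thesis unfolding oi2rd_def using A B C by blast
qed

lemma fw_weight:
  assumes "n \<ge> 2"
  shows "oi2rd_weight (GG m n) fw = m * n - m"
proof -
  let ?V = "{0..<m} \<times> {0..<n}"
  let ?Z = "(\<lambda>x. (x, x mod 2)) ` {..<m}"
  have s0: "?Z \<subseteq> ?V" using assms by auto
  have cV0: "card ?Z = m" by (subst card_image) (auto simp: inj_on_def)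
  have fin: "finite ?V" by simp
  have e1: "oi2rd_weight (GG m n) fw = (\<Sum>v\<in>?V. card (fw v))"
    by (simp add: oi2rd_weight_def G_verts)
  have e2: "(\<Sum>v\<in>?V. card (fw v)) = (\<Sum>v\<in>?V - ?Z. card (fw v)) + (\<Sum>v\<in>?Z. card (fw v))"
    by (rule sum.subset_diff[OF s0 fin])
  have e3: "(\<Sum>v\<in>?Z. card (fw v)) = 0" by (auto simp: fw_def)
  have e4: "(\<Sum>v\<in>?V - ?Z. card (fw v)) = (\<Sum>v\<in>?V - ?Z. 1)"
  proof (rule sum.cong)
    fix v assume "v \<in> ?V - ?Z"
    then obtain x y where v: "v = (x,y)" "x < m" "y \<noteq> x mod 2" by (cases v) auto
    thus "card (fw v) = 1" by (auto simp: fw_def)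
  qed simp
  have e5: "(\<Sum>v\<in>?V - ?Z. (1::nat)) = m*n - m" using cV0 s0 by (simp add: card_Diff_subset)
  show ?thesis using e1 e2 e3 e4 e5 by simp
qed

lemma gamma_val:
  assumes "m \<ge> 2" "n \<ge> 2"
  shows "gamma_oir2 (GG m n) = m * (n - 1)"
proof -
  let ?S = "{oi2rd_weight (GG m n) f | f. oi2rd (GG m n) f}"
  have fin: "finite ?S"
  proof (rule finite_subset[of _ "{..2 * card (verts (GG m n))}"])
    show "?S \<subseteq> {..2 * card (verts (GG m n))}"
    proof
      fix w assume "w \<in> ?S"
      then obtain f where w: "w = oi2rd_weight (GG m n) f" and f: "oi2rd (GG m n) f" by blast
      have "w \<le> (\<Sum>v\<in>verts (GG m n). 2)" unfolding w oi2rd_weight_def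
      proof (rule sum_mono)
        fix v assume "v \<in> verts (GG m n)"
        hence "f v \<subseteq> {1,2}" using f by (simp add: oi2rd_def)
        hence "card (f v) \<le> card {1,2::nat}" by (rule card_mono[rotated]) simp
        thus "card (f v) \<le> 2" by simp
      qed
      thus "w \<in> {..2 * card (verts (GG m n))}" by simp
    qed
  qed simp
  have mem: "m * n - m \<in> ?S"
  proof -
    have "oi2rd (GG m n) fw" by (rule fw_oi[OF assms])
    hence "oi2rd_weight (GG m n) fw \<in> ?S" by blast
    thus ?thesis using fw_weight[OF assms(2)] by simp
  qed
  have lb: "\<forall>w\<in>?S. m * n - m \<le> w" using lower by blast
  have "Min ?S = m * n - m"
    using Min_eqI[OF fin] lb mem by blast
  thus ?thesis unfolding gamma_oir2_def by (simp add: diff_mult_distrib2)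
qed



lemma P_edges: "(i,j) \<in> edges (path_graph m) \<longleftrightarrow> i < m \<and> j < m \<and> (j = i+1 \<or> i = j+1)"
  by (simp add: path_graph_def edges_def)
lemma P_verts: "verts (path_graph m) = {0..<m}" by (simp add: path_graph_def verts_def)
lemma K_edges: "(i,j) \<in> edges (complete_graph n) \<longleftrightarrow> i < n \<and> j < n \<and> i \<noteq> j"
  by (simp add: complete_graph_def edges_def)
lemma K_verts: "verts (complete_graph n) = {0..<n}" by (simp add: complete_graph_def verts_def)

lemma fin_cards: "finite {card S | S. S \<subseteq> {0..<(k::nat)} \<and> P S}"
  by (rule finite_subset[of _ "{..k}"]) (auto dest!: card_mono[rotated, of _ "{0..<k}"])

lemma evens: "{i. i < m \<and> even (i::nat)} = (\<lambda>k. 2*k) ` {..<(m+1) div 2}"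
proof (intro set_eqI iffI)
  fix x assume "x \<in> {i. i < m \<and> even (i::nat)}"
  hence "x = 2*(x div 2)" "x div 2 < (m+1) div 2" by auto
  thus "x \<in> (\<lambda>k. 2*k) ` {..<(m+1) div 2}" by blast
qed auto

lemma odds: "{i. i < m \<and> odd (i::nat)} = (\<lambda>k. 2*k+1) ` {..<m div 2}"
proof (intro set_eqI iffI)
  fix x assume "x \<in> {i. i < m \<and> odd (i::nat)}"
  hence "x = 2*(x div 2)+1" "x div 2 < m div 2" by (auto, presburger)
  thus "x \<in> (\<lambda>k. 2*k+1) ` {..<m div 2}" by blast
qed auto

lemma cover_K: "n \<ge> 1 \<Longrightarrow> cover_number (complete_graph n) = n - 1"
proof -
  assume n: "n \<ge> 1"
  let ?S = "{card S | S. vertex_cover (complete_graph n) S}"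
  have fin: "finite ?S"
    using fin_cards[of n "\<lambda>S. vertex_cover (complete_graph n) S"]
    by (simp add: vertex_cover_def K_verts)
  have w: "vertex_cover (complete_graph n) {0..<n-1}"
    by (auto simp: vertex_cover_def K_verts K_edges)
  hence mem: "n - 1 \<in> ?S" by force
  have lb: "\<forall>c\<in>?S. n - 1 \<le> c"
  proof
    fix c assume "c \<in> ?S"
    then obtain S where c: "c = card S" and S: "vertex_cover (complete_graph n) S" by blast
    have sub: "S \<subseteq> {0..<n}" using S by (simp add: vertex_cover_def K_verts)
    have "card ({0..<n} - S) \<le> Suc 0"
    proof -
      have fi: "finite ({0..<n} - S)" by simp
      have "\<forall>x\<in>{0..<n} - S. \<forall>y\<in>{0..<n} - S. x = y"
      proof (intro ballI, rule ccontr)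
        fix x y assume "x \<in> {0..<n} - S" "y \<in> {0..<n} - S" "x \<noteq> y"
        hence "(x,y) \<in> edges (complete_graph n)" "x \<notin> S" "y \<notin> S" by (auto simp: K_edges)
        thus False using S unfolding vertex_cover_def by blast
      qed
      thus ?thesis using card_le_Suc0_iff_eq[OF fi] by blast
    qed
    moreover have "card ({0..<n} - S) = n - card S" using sub by (simp add: card_Diff_subset finite_subset)
    ultimately show "n - 1 \<le> c" using c by linarith
  qed
  show ?thesis unfolding cover_number_def using Min_eqI[OF fin] lb mem by blast
qed

lemma cover_P: "cover_number (path_graph m) = m div 2"
proof -
  let ?S = "{card S | S. vertex_cover (path_graph m) S}"
  have fin: "finite ?S"
    using fin_cards[of m "\<lambda>S. vertex_cover (path_graph m) S"]
    by (simp add: vertex_cover_def P_verts)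
  have w: "vertex_cover (path_graph m) {i. i < m \<and> odd i}"
    by (auto simp: vertex_cover_def P_verts P_edges)
  have "card {i. i < m \<and> odd i} = m div 2" unfolding odds
    by (subst card_image) (auto simp: inj_on_def)
  hence mem: "m div 2 \<in> ?S" using w by force
  have lb: "\<forall>c\<in>?S. m div 2 \<le> c"
  proof
    fix c assume "c \<in> ?S"
    then obtain S where c: "c = card S" and S: "vertex_cover (path_graph m) S" by blast
    have sub: "S \<subseteq> {0..<m}" using S by (simp add: vertex_cover_def P_verts)
    define g where "g k = (if 2*k \<in> S then 2*k else 2*k+1)" for k
    have gS: "g ` {..<m div 2} \<subseteq> S"
    proof
      fix z assume "z \<in> g ` {..<m div 2}"
      then obtain k where k: "k < m div 2" "z = g k" by blast
      have "(2*k, 2*k+1) \<in> edges (path_graph m)" using k by (auto simp: P_edges)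
      hence "2*k \<in> S \<or> 2*k+1 \<in> S" using S unfolding vertex_cover_def by blast
      thus "z \<in> S" using k g_def by auto
    qed
    have "inj_on g {..<m div 2}"
    proof (rule inj_onI)
      fix a b assume "g a = g b"
      hence "g a div 2 = g b div 2" by simp
      moreover have "g a div 2 = a" "g b div 2 = b" by (auto simp: g_def)
      ultimately show "a = b" by simp
    qed
    hence "card (g ` {..<m div 2}) = m div 2" by (simp add: card_image)
    moreover have "card (g ` {..<m div 2}) \<le> card S"
      using gS sub by (meson card_mono finite_atLeastLessThan finite_subset)
    ultimately show "m div 2 \<le> c" using c by simp
  qed
  show ?thesis unfolding cover_number_def using Min_eqI[OF fin] lb mem by blast
qed

lemma indep_P: "indep_number (path_graph m) = (m+1) div 2"
proof -
  let ?S = "{card S | S. independent_set (path_graph m) S}"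
  have fin: "finite ?S"
    using fin_cards[of m "\<lambda>S. independent_set (path_graph m) S"]
    by (simp add: independent_set_def P_verts)
  have w: "independent_set (path_graph m) {i. i < m \<and> even i}"
    by (auto simp: independent_set_def P_verts P_edges)
  have "card {i. i < m \<and> even i} = (m+1) div 2" unfolding evens
    by (subst card_image) (auto simp: inj_on_def)
  hence mem: "(m+1) div 2 \<in> ?S" using w by force
  have ub: "\<forall>c\<in>?S. c \<le> (m+1) div 2"
  proof
    fix c assume "c \<in> ?S"
    then obtain S where c: "c = card S" and S: "independent_set (path_graph m) S" by blast
    have sub: "S \<subseteq> {0..<m}" using S by (simp add: independent_set_def P_verts)
    have "inj_on (\<lambda>i. i div 2) S"
    proof (rule inj_onI)
      fix a b assume ab: "a \<in> S" "b \<in> S" "a div 2 = b div 2"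
      show "a = b"
      proof (rule ccontr)
        assume "a \<noteq> b"
        hence "b = a + 1 \<or> a = b + 1" using ab(3) by presburger
        hence "(a,b) \<in> edges (path_graph m)" using ab sub by (auto simp: P_edges)
        thus False using S ab unfolding independent_set_def by blast
      qed
    qed
    moreover have "(\<lambda>i. i div 2) ` S \<subseteq> {..<(m+1) div 2}" using sub by auto
    ultimately have "card S \<le> card {..<(m+1) div 2}" by (meson card_inj_on_le finite_lessThan)
    thus "c \<le> (m+1) div 2" using c by simp
  qed
  show ?thesis unfolding indep_number_def using Max_eqI[OF fin] ub mem by blast
qed


theorem mainTheorem5:
  fixes m n :: nat
  assumes "m \<ge> 2" and "n \<ge> 2" and "n \<ge> m div 2 + 1"
  shows "gamma_oir2 (cart_prod (path_graph m) (complete_graph n)) = m * (n - 1)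
    \<and> int (m * (n - 1)) =
        int (indep_number (path_graph m)) * int (cover_number (complete_graph n))
        + int (cover_number (path_graph m)) * int (card (verts (complete_graph n)))
        - int (min (cover_number (path_graph m)) (cover_number (complete_graph n)))"
proof
  show "gamma_oir2 (cart_prod (path_graph m) (complete_graph n)) = m * (n - 1)"
    using gamma_val[OF assms(1,2)] by simp
next
  define a where "a = m div 2"
  define b where "b = (m+1) div 2"
  define c where "c = n - 1"
  have mab: "m = a + b" unfolding a_def b_def by presburger
  have nc: "n = c + 1" unfolding c_def using assms by simp
  have ac: "min a c = a" using assms unfolding a_def c_def by simp
  have e: "indep_number (path_graph m) = b" "cover_number (complete_graph n) = c"
    "cover_number (path_graph m) = a" "card (verts (complete_graph n)) = c + 1"
    using indep_P cover_K[of n] cover_P assms nc unfolding a_def b_def c_def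
    by (auto simp: K_verts)
  show "int (m * (n - 1)) =
        int (indep_number (path_graph m)) * int (cover_number (complete_graph n))
        + int (cover_number (path_graph m)) * int (card (verts (complete_graph n)))
        - int (min (cover_number (path_graph m)) (cover_number (complete_graph n)))"
  proof -
    have "int (m * (n-1)) = int ((a+b)*c)" using mab nc by simp
    also have "\<dots> = int b * int c + int a * int (c+1) - int (min a c)" unfolding ac by (simp add: algebra_simps)
    finally show ?thesis unfolding e .
  qed
qed

end
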